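(* Let $A$ be a torsion-free Abelian group with endomorphism ring $E=\mathrm{End}\,A$. Then $E$ is centrally essential if and only if the quasi-endomorphism ring $\mathbb{Q}E=\mathbb{Q}\otimes E$ is centrally essential.
   Context: All rings are associative with non-zero identity. A ring $R$ is centrally essential if for every non-zero $a\in R$ there exist non-zero elements $x,y$ of the center of $R$ with $ax=y$. The quasi-endomorphism ring $\mathbb{Q}E=\mathbb{Q}\otimes\mathrm{End}\,A$ is identified with $\{\alpha\in\mathrm{End}_{\mathbb{Q}}(\mathbb{Q}\otimes A)\mid n\alpha\in\mathrm{End}\,A\text{ for some positive integer } n\}$. *)

theory Defs
  imports Main
begin

primrec nsm :: "nat \<Rightarrow> 'a::ab_group_add \<Rightarrow> 'a" where
  "nsm 0 x = 0"
| "nsm (Suc n) x = x + nsm n x"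

definition torsion_free :: "'a::ab_group_add itself \<Rightarrow> bool" where
  "torsion_free _ \<longleftrightarrow> (\<forall>n::nat. \<forall>x::'a. n > 0 \<longrightarrow> nsm n x = 0 \<longrightarrow> x = 0)"

definition End :: "('a::ab_group_add \<Rightarrow> 'a) set" where
  "End = {f. \<forall>x y. f (x + y) = f x + f y}"

definition center_End :: "('a::ab_group_add \<Rightarrow> 'a) set" where
  "center_End = {c \<in> End. \<forall>f \<in> End. c \<circ> f = f \<circ> c}"

definition centrally_essential_End :: "'a::ab_group_add itself \<Rightarrow> bool" where
  "centrally_essential_End _ \<longleftrightarrow>
     (\<forall>a \<in> (End :: ('a \<Rightarrow> 'a) set). a \<noteq> (\<lambda>_. 0) \<longrightarrow>
        (\<exists>x \<in> center_End. \<exists>y \<in> center_End.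
           x \<noteq> (\<lambda>_. 0) \<and> y \<noteq> (\<lambda>_. 0) \<and> a \<circ> x = y))"

text \<open>The quasi-endomorphism ring QE = Q \<otimes> End A, realised in the standard way as
  formal fractions (f, n) standing for (1/n) \<otimes> f, with f \<in> End A, n > 0, where
  (1/n) \<otimes> f = (1/m) \<otimes> g iff k(m f - n g) = 0 for some k > 0.
  Ring operations: (f,n)+(g,m) = (m f + n g, n m), (f,n)(g,m) = (f \<circ> g, n m).\<close>
type_synonym 'a qe = "('a \<Rightarrow> 'a) \<times> nat"

definition QE :: "('a::ab_group_add) qe set" where
  "QE = {p. fst p \<in> End \<and> snd p > 0}"

definition qe_eq :: "('a::ab_group_add) qe \<Rightarrow> 'a qe \<Rightarrow> bool" where
  "qe_eq p q \<longleftrightarrow> (\<exists>k::nat. k > 0 \<and>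
     (\<forall>x. nsm k (nsm (snd q) (fst p x) - nsm (snd p) (fst q x)) = 0))"

definition qe_zero :: "('a::ab_group_add) qe" where
  "qe_zero = ((\<lambda>_. 0), 1)"

definition qe_mult :: "('a::ab_group_add) qe \<Rightarrow> 'a qe \<Rightarrow> 'a qe" where
  "qe_mult p q = (fst p \<circ> fst q, snd p * snd q)"

definition center_QE :: "('a::ab_group_add) qe set" where
  "center_QE = {c \<in> QE. \<forall>q \<in> QE. qe_eq (qe_mult c q) (qe_mult q c)}"

definition centrally_essential_QE :: "'a::ab_group_add itself \<Rightarrow> bool" where
  "centrally_essential_QE _ \<longleftrightarrow>
     (\<forall>a \<in> (QE :: 'a qe set). \<not> qe_eq a qe_zero \<longrightarrow>
        (\<exists>x \<in> center_QE. \<exists>y \<in> center_QE.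
           \<not> qe_eq x qe_zero \<and> \<not> qe_eq y qe_zero \<and> qe_eq (qe_mult a x) y))"

end

theory Submission
  imports Defs
begin
lemma nsm_add: "nsm n (x + y) = nsm n x + nsm n (y::'a::ab_group_add)"
  by (induct n) (simp_all add: algebra_simps)

lemma nsm_zero[simp]: "nsm n (0::'a::ab_group_add) = 0"
  by (induct n) simp_all

lemma nsm_diff: "nsm n (x - y) = nsm n x - nsm n (y::'a::ab_group_add)"
  by (induct n) (simp_all add: algebra_simps)
lemma End_zero: "f \<in> End \<Longrightarrow> f 0 = 0"
proof -
  assume "f \<in> End"
  then have "f (0 + 0) = f 0 + f 0" unfolding End_def by blast
  then show "f 0 = 0" by simp
qed

lemma End_nsm: "f \<in> End \<Longrightarrow> f (nsm n x) = nsm n (f x)"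
proof (induct n)
  case 0 then show ?case by (simp add: End_zero)
next
  case (Suc n)
  have "f (x + nsm n x) = f x + f (nsm n x)" using Suc.prems unfolding End_def by blast
  then show ?case using Suc by simp
qed

lemma tf: "torsion_free TYPE('a::ab_group_add) \<Longrightarrow> n > 0 \<Longrightarrow> nsm n (x::'a) = 0 \<Longrightarrow> x = 0"
  unfolding torsion_free_def by blast
lemma qe_eq_tf:
  assumes "torsion_free TYPE('a::ab_group_add)"
  shows "qe_eq (p::'a qe) q \<longleftrightarrow> (\<forall>x. nsm (snd q) (fst p x) = nsm (snd p) (fst q x))"
proof
  assume "qe_eq p q"
  then obtain k where k: "k > 0" "\<forall>x. nsm k (nsm (snd q) (fst p x) - nsm (snd p) (fst q x)) = 0"
    unfolding qe_eq_def by blast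
  show "\<forall>x. nsm (snd q) (fst p x) = nsm (snd p) (fst q x)"
  proof
    fix x
    have "nsm (snd q) (fst p x) - nsm (snd p) (fst q x) = 0"
      using tf[OF assms k(1)] k(2) by blast
    then show "nsm (snd q) (fst p x) = nsm (snd p) (fst q x)" by simp
  qed
next
  assume "\<forall>x. nsm (snd q) (fst p x) = nsm (snd p) (fst q x)"
  then show "qe_eq p q" unfolding qe_eq_def by (intro exI[of _ 1]) simp
qed

lemma qe_zero_tf:
  assumes "torsion_free TYPE('a::ab_group_add)"
  shows "qe_eq (p::'a qe) qe_zero \<longleftrightarrow> fst p = (\<lambda>_. 0)"
  unfolding qe_eq_tf[OF assms] qe_zero_def by (auto simp: fun_eq_iff)

lemma center_QE_tf:
  assumes "torsion_free TYPE('a::ab_group_add)"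
  shows "(c::'a qe) \<in> center_QE \<longleftrightarrow> fst c \<in> center_End \<and> snd c > 0"
proof
  assume c: "c \<in> center_QE"
  have pos: "snd c > 0" using c by (simp add: center_QE_def QE_def)
  have "fst c \<circ> f = f \<circ> fst c" if f: "f \<in> End" for f
  proof
    fix x
    have "(f, 1) \<in> QE" using f by (simp add: QE_def)
    then have "qe_eq (qe_mult c (f,1)) (qe_mult (f,1) c)" using c by (simp add: center_QE_def)
    then have "nsm (snd c) (fst c (f x)) = nsm (snd c) (f (fst c x))"
      unfolding qe_eq_tf[OF assms] qe_mult_def by simp
    then have "nsm (snd c) (fst c (f x) - f (fst c x)) = 0" by (simp add: nsm_diff)
    then have "fst c (f x) - f (fst c x) = 0" using tf[OF assms pos] by blast
    then show "(fst c \<circ> f) x = (f \<circ> fst c) x" by simp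
  qed
  then show "fst c \<in> center_End \<and> snd c > 0" using c pos
    unfolding center_QE_def QE_def center_End_def by blast
next
  assume c: "fst c \<in> center_End \<and> snd c > 0"
  show "c \<in> center_QE"
    unfolding center_QE_def
  proof (intro CollectI conjI ballI)
    show "c \<in> QE" using c by (simp add: QE_def center_End_def)
    fix q :: "'a qe" assume "q \<in> QE"
    then have "fst c \<circ> fst q = fst q \<circ> fst c" using c by (simp add: QE_def center_End_def)
    then show "qe_eq (qe_mult c q) (qe_mult q c)"
      unfolding qe_eq_tf[OF assms] qe_mult_def by (simp add: mult.commute fun_eq_iff)
  qed
qed
theorem proposition3p2:
  assumes "torsion_free TYPE('a::ab_group_add)"
  shows "centrally_essential_End TYPE('a) \<longleftrightarrow> centrally_essential_QE TYPE('a)"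
proof
  assume H: "centrally_essential_End TYPE('a)"
  show "centrally_essential_QE TYPE('a)"
    unfolding centrally_essential_QE_def
  proof (intro ballI impI)
    fix a :: "'a qe" assume a: "a \<in> QE" "\<not> qe_eq a qe_zero"
    have aE: "fst a \<in> End" "snd a > 0" using a(1) by (auto simp: QE_def)
    have anz: "fst a \<noteq> (\<lambda>_. 0)" using a(2) qe_zero_tf[OF assms] by blast
    obtain x y where xy: "x \<in> center_End" "y \<in> center_End" "x \<noteq> (\<lambda>_. 0)" "y \<noteq> (\<lambda>_. 0)"
      "fst a \<circ> x = y"
      using H aE anz unfolding centrally_essential_End_def by blast
    have 1: "(x, 1) \<in> center_QE" using xy(1) center_QE_tf[OF assms] by simp
    have 2: "(y, snd a) \<in> center_QE" using xy(2) aE(2) center_QE_tf[OF assms] by simp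
    have 3: "\<not> qe_eq (x, 1) qe_zero" using xy(3) qe_zero_tf[OF assms] by simp
    have 4: "\<not> qe_eq (y, snd a) qe_zero" using xy(4) qe_zero_tf[OF assms] by simp
    have 5: "qe_eq (qe_mult a (x, 1)) (y, snd a)"
      unfolding qe_eq_tf[OF assms] qe_mult_def using xy(5) by auto
    show "\<exists>x\<in>center_QE. \<exists>y\<in>center_QE. \<not> qe_eq x qe_zero \<and> \<not> qe_eq y qe_zero \<and> qe_eq (qe_mult a x) y"
      using 1 2 3 4 5 by blast
  qed
next
  assume H: "centrally_essential_QE TYPE('a)"
  show "centrally_essential_End TYPE('a)"
    unfolding centrally_essential_End_def
  proof (intro ballI impI)
    fix f :: "'a \<Rightarrow> 'a" assume f: "f \<in> End" "f \<noteq> (\<lambda>_. 0)"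
    have "(f, 1) \<in> QE" using f by (simp add: QE_def)
    moreover have "\<not> qe_eq (f, 1) qe_zero" using f(2) qe_zero_tf[OF assms] by simp
    ultimately obtain x y where xy: "x \<in> center_QE" "y \<in> center_QE" "\<not> qe_eq x qe_zero"
      "\<not> qe_eq y qe_zero" "qe_eq (qe_mult (f,1) x) y"
      using H unfolding centrally_essential_QE_def by blast
    obtain c n where x: "x = (c, n)" by fastforce
    obtain d m where y: "y = (d, m)" by fastforce
    have c: "c \<in> center_End" "n > 0" using xy(1) center_QE_tf[OF assms] x by simp_all
    have c3: "c \<noteq> (\<lambda>_. 0)" using xy(3) qe_zero_tf[OF assms] x by simp
    have d: "d \<in> center_End" "m > 0" using xy(2) center_QE_tf[OF assms] y by simp_all
    have d3: "d \<noteq> (\<lambda>_. 0)" using xy(4) qe_zero_tf[OF assms] y by simp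
    have eq: "nsm m (f (c z)) = nsm n (d z)" for z
      using xy(5) unfolding x y qe_eq_tf[OF assms] qe_mult_def by simp
    have cent: "(\<lambda>z. nsm k (e z)) \<in> center_End" if e: "e \<in> center_End" for e :: "'a \<Rightarrow> 'a" and k
    proof -
      have eE: "e \<in> End" using e by (simp add: center_End_def)
      have "(\<lambda>z. nsm k (e z)) \<in> End" using eE unfolding End_def by (simp add: nsm_add)
      moreover have "(\<lambda>z. nsm k (e z)) \<circ> g = g \<circ> (\<lambda>z. nsm k (e z))" if g: "g \<in> End" for g
      proof
        fix z
        have "e \<circ> g = g \<circ> e" using e g unfolding center_End_def by blast
        then have "e (g z) = g (e z)" by (metis comp_apply)
        then show "((\<lambda>z. nsm k (e z)) \<circ> g) z = (g \<circ> (\<lambda>z. nsm k (e z))) z"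
          by (simp add: End_nsm[OF g])
      qed
      ultimately show ?thesis unfolding center_End_def by blast
    qed
    have nz: "(\<lambda>z. nsm k (e z)) \<noteq> (\<lambda>_. 0)" if ne: "e \<noteq> (\<lambda>_. 0)" and k: "k > 0" for e :: "'a \<Rightarrow> 'a" and k
    proof
      assume "(\<lambda>z. nsm k (e z)) = (\<lambda>_. 0)"
      then have "nsm k (e z) = 0" for z by metis
      then have "e z = 0" for z using tf[OF assms k] by blast
      then show False using ne by blast
    qed
    have comp: "f \<circ> (\<lambda>z. nsm m (c z)) = (\<lambda>z. nsm n (d z))"
    proof
      fix z show "(f \<circ> (\<lambda>z. nsm m (c z))) z = nsm n (d z)"
        using eq[of z] by (simp add: End_nsm[OF f(1)])
    qed
    show "\<exists>x\<in>center_End. \<exists>y\<in>center_End. x \<noteq> (\<lambda>_. 0) \<and> y \<noteq> (\<lambda>_. 0) \<and> f \<circ> x = y"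
      using cent[OF c(1), of m] cent[OF d(1), of n] nz[OF c3 d(2)] nz[OF d3 c(2)] comp by blast
  qed
qed
end
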